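(* For every sectorial solution of system (CSF) there exists $c_0>0$ such that $\min_i|\mathbf v_i(t)|\ge c_0$ for all $t\ge0$.
   Context: Fix integers $N\ge1$, $n\ge1$, masses $m_1,\dots,m_N>0$ with $M=\sum_i m_i$, parameters $\sigma>0$, $p>0$, $\kappa\ge0$, and a communication kernel $\phi:[0,\infty)\to(0,\infty)$ that is smooth, positive and non-increasing. Write $\phi_{ij}=\phi(|\mathbf x_i-\mathbf x_j|)$, with $|\cdot|$ the Euclidean norm on $\mathbb R^n$. System (CSF) is, for $i=1,\dots,N$, $$\dot{\mathbf x}_i=\mathbf v_i,\qquad \dot{\mathbf v}_i=\sum_{j=1}^N m_j\phi_{ij}(\mathbf v_j-\mathbf v_i)+\sigma(\theta_i-|\mathbf v_i|^p)\mathbf v_i,\qquad \dot\theta_i=\kappa\sum_{j=1}^N m_j\phi_{ij}(\theta_j-\theta_i),$$ with $\mathbf x_i,\mathbf v_i\in\mathbb R^n$ and initial values $\theta_i(0)>0$; solutions are considered for $t\ge0$. A solution is called sectorial if there exists a unit vector $\mathbf e\in\mathbb R^n$ with $\mathbf e\cdot\mathbf v_i(0)>0$ for all $i=1,\dots,N$. *)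

theory Defs
  imports "HOL-Analysis.Analysis"
begin

text \<open>Communication kernel: smooth (C-infinity on [0,inf), one-sided at 0),
  positive and non-increasing on [0,inf).\<close>
definition comm_kernel :: "(real \<Rightarrow> real) \<Rightarrow> bool" where
  "comm_kernel \<phi> \<longleftrightarrow>
     (\<exists>D :: nat \<Rightarrow> real \<Rightarrow> real. D 0 = \<phi> \<and>
        (\<forall>k. \<forall>s\<ge>0. (D k has_real_derivative D (Suc k) s) (at s within {0..}))) \<and>
     (\<forall>s\<ge>0. \<phi> s > 0) \<and>
     (\<forall>s t. 0 \<le> s \<longrightarrow> s \<le> t \<longrightarrow> \<phi> t \<le> \<phi> s)"

definition CSF_solution ::
  "nat \<Rightarrow> (nat \<Rightarrow> real) \<Rightarrow> real \<Rightarrow> real \<Rightarrow> real \<Rightarrow> (real \<Rightarrow> real)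
   \<Rightarrow> (nat \<Rightarrow> real \<Rightarrow> 'a::euclidean_space) \<Rightarrow> (nat \<Rightarrow> real \<Rightarrow> 'a)
   \<Rightarrow> (nat \<Rightarrow> real \<Rightarrow> real) \<Rightarrow> bool" where
  "CSF_solution N m \<sigma> p \<kappa> \<phi> x v \<theta> \<longleftrightarrow>
     (\<forall>i<N. \<forall>t\<ge>0.
        (x i has_vector_derivative v i t) (at t within {0..}) \<and>
        (v i has_vector_derivative
            ((\<Sum>j<N. (m j * \<phi> (norm (x i t - x j t))) *\<^sub>R (v j t - v i t))
             + (\<sigma> * (\<theta> i t - norm (v i t) powr p)) *\<^sub>R v i t)) (at t within {0..}) \<and>
        (\<theta> i has_real_derivative
            (\<kappa> * (\<Sum>j<N. m j * \<phi> (norm (x i t - x j t)) * (\<theta> j t - \<theta> i t)))) (at t within {0..}))"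

definition sectorial :: "nat \<Rightarrow> (nat \<Rightarrow> real \<Rightarrow> 'a::euclidean_space) \<Rightarrow> bool" where
  "sectorial N v \<longleftrightarrow> (\<exists>e. norm e = 1 \<and> (\<forall>i<N. e \<bullet> v i 0 > 0))"

end

theory Submission
  imports Defs
begin

lemma vd_inner:
  fixes f :: "real \<Rightarrow> 'a::real_inner"
  assumes "(f has_vector_derivative V) (at t within S)"
  shows "((\<lambda>s. e \<bullet> f s) has_real_derivative (e \<bullet> V)) (at t within S)"
proof -
  have "((\<lambda>s. e \<bullet> f s) has_derivative (\<lambda>x. e \<bullet> (x *\<^sub>R V))) (at t within S)"
    using assms unfolding has_vector_derivative_def by (rule has_derivative_inner_right)
  moreover have "(\<lambda>x. e \<bullet> (x *\<^sub>R V)) = (*) (e \<bullet> V)" by (auto simp: fun_eq_iff)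
  ultimately show ?thesis unfolding has_field_derivative_def by simp
qed
lemma vd_norm:
  fixes f :: "real \<Rightarrow> 'a::real_inner"
  assumes "(f has_vector_derivative V) (at t within S)" "f t \<noteq> 0"
  shows "((\<lambda>s. norm (f s)) has_real_derivative (f t \<bullet> V / norm (f t))) (at t within S)"
proof -
  have "(norm has_derivative (\<lambda>y. f t \<bullet> y / norm (f t))) (at (f t))"
    using has_derivative_norm[OF assms(2)] by (simp add: sgn_div_norm divide_inverse_commute inner_commute) 
  from has_derivative_compose[OF assms(1)[unfolded has_vector_derivative_def] this]
  have "((\<lambda>x. norm (f x)) has_derivative (\<lambda>x. x * (f t \<bullet> V) / norm (f t))) (at t within S)"
    by (simp add: o_def)
  moreover have "(\<lambda>x. x * (f t \<bullet> V) / norm (f t)) = (*) (f t \<bullet> V / norm (f t))" by (auto simp: fun_eq_iff)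
  ultimately show ?thesis unfolding has_field_derivative_def by simp
qed
lemma barrier:
  fixes F :: "'i \<Rightarrow> real \<Rightarrow> real" and I :: "'i set"
  assumes fin: "finite I"
    and cont: "\<And>i. i \<in> I \<Longrightarrow> continuous_on {0..} (F i)"
    and init: "\<And>i. i \<in> I \<Longrightarrow> F i 0 > 0"
    and step: "\<And>t i. t > 0 \<Longrightarrow> i \<in> I \<Longrightarrow> (\<forall>j\<in>I. F j t \<ge> 0) \<Longrightarrow> F i t = 0 \<Longrightarrow>
        \<exists>D>0. (F i has_real_derivative D) (at t within {0..})"
  shows "\<forall>t\<ge>0. \<forall>i\<in>I. F i t > 0"
proof (rule ccontr)
  assume "\<not> ?thesis"
  then obtain s i0 where s: "s \<ge> 0" "i0 \<in> I" "F i0 s \<le> 0" by force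
  define S where "S = (\<Union>i\<in>I. {0..} \<inter> F i -` {..0})"
  have cl: "\<forall>i\<in>I. closed ({0..} \<inter> F i -` {..0})"
    using cont by (auto intro!: continuous_closed_preimage)
  have "closed S" unfolding S_def using closed_UN[OF fin cl] .
  moreover have "S \<noteq> {}" using s by (auto simp: S_def)
  moreover have "bdd_below S" unfolding S_def by (rule bdd_belowI[of _ 0]) auto
  ultimately have TS: "Inf S \<in> S" by (rule closed_contains_Inf[rotated -1])
  define T where "T = Inf S"
  have lowT: "\<And>t. t \<in> S \<Longrightarrow> T \<le> t" unfolding T_def using \<open>bdd_below S\<close> by (rule cInf_lower[rotated])
  from TS obtain i where i: "i \<in> I" "T \<ge> 0" "F i T \<le> 0" by (auto simp: S_def T_def)
  have pos_before: "F j t > 0" if "j \<in> I" "0 \<le> t" "t < T" for j t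
  proof (rule ccontr)
    assume "\<not> F j t > 0"
    then have "t \<in> S" using that by (force simp: S_def not_less)
    with lowT[OF this] that show False by simp
  qed
  have "T \<noteq> 0" using i init[OF i(1)] by auto
  with i have Tpos: "T > 0" by simp
  have nonneg: "F j T \<ge> 0" if j: "j \<in> I" for j
  proof (rule ccontr)
    assume "\<not> F j T \<ge> 0"
    then have neg: "F j T < 0" by simp
    have "continuous (at T within {0..}) (F j)"
      using cont[OF j] i(2) by (simp add: continuous_on_eq_continuous_within)
    then obtain d where d: "d > 0" "\<And>y. y \<in> {0..} \<Longrightarrow> dist y T < d \<Longrightarrow> dist (F j y) (F j T) < - F j T"
      unfolding continuous_within_eps_delta using neg by (metis neg_0_less_iff_less)
    define y where "y = T - min d T / 2"
    have "y \<ge> 0" "y < T" "dist y T < d" using d Tpos by (auto simp: y_def dist_real_def)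
    then have "F j y < 0" using d(2)[of y] by (auto simp: dist_real_def)
    with pos_before[OF j \<open>y \<ge> 0\<close> \<open>y < T\<close>] show False by simp
  qed
  then have zero: "F i T = 0" using i by force
  from step[OF Tpos i(1) _ zero] nonneg obtain D where D: "D > 0" "(F i has_real_derivative D) (at T within {0..})" by blast
  have "at T within {0..} = at T" using Tpos by (intro at_within_interior) auto
  with D have "DERIV (F i) T :> D" by simp
  from DERIV_pos_inc_left[OF this D(1)] obtain d where d: "d > 0" "\<And>h. h > 0 \<Longrightarrow> h < d \<Longrightarrow> F i (T - h) < F i T" by blast
  define h where "h = min d T / 2"
  have "h > 0" "h < d" "T - h \<ge> 0" "T - h < T" using d Tpos by (auto simp: h_def)
  with d(2)[of h] zero pos_before[OF i(1), of "T-h"] show False by simp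
qed
lemma inner_coupling:
  fixes u :: "'a::real_inner"
  shows "u \<bullet> (\<Sum>j\<in>J. c j *\<^sub>R (v j - vi)) = (\<Sum>j\<in>J. c j * (u \<bullet> v j - u \<bullet> vi))"
  by (simp add: inner_sum_right inner_diff_right)

lemma k0_ineq:
  fixes e :: "'a::real_inner"
  assumes "\<forall>j\<in>J. c j \<ge> 0 \<and> e \<bullet> v j \<ge> e \<bullet> vi"
  shows "e \<bullet> (\<Sum>j\<in>J. c j *\<^sub>R (v j - vi)) \<ge> 0"
  unfolding inner_coupling using assms by (intro sum_nonneg) auto

lemma k1_ineq:
  fixes e vi :: "'a::real_inner"
  assumes "vi \<noteq> 0" "a \<ge> 0" "a * norm vi = e \<bullet> vi"
    and "\<forall>j\<in>J. c j \<ge> 0 \<and> e \<bullet> v j \<ge> a * norm (v j)"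
  shows "e \<bullet> (\<Sum>j\<in>J. c j *\<^sub>R (v j - vi)) - a * (vi \<bullet> (\<Sum>j\<in>J. c j *\<^sub>R (v j - vi))) / norm vi \<ge> 0"
proof -
  have nv: "norm vi > 0" using assms(1) by simp
  have "e \<bullet> (\<Sum>j\<in>J. c j *\<^sub>R (v j - vi)) - a * (vi \<bullet> (\<Sum>j\<in>J. c j *\<^sub>R (v j - vi))) / norm vi
      = (\<Sum>j\<in>J. c j * ((e \<bullet> v j - e \<bullet> vi) - a * (vi \<bullet> v j - vi \<bullet> vi) / norm vi))"
    unfolding inner_coupling
    by (simp add: sum_subtractf sum_distrib_left sum.distrib algebra_simps flip: sum_divide_distrib)
  also have "\<dots> \<ge> 0"
  proof (intro sum_nonneg)
    fix j assume j: "j \<in> J"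
    have cs: "vi \<bullet> v j \<le> norm vi * norm (v j)" by (rule norm_cauchy_schwarz)
    have "a * (vi \<bullet> v j) / norm vi \<le> a * norm (v j)"
      using mult_left_mono[OF cs assms(2)] nv by (simp add: divide_le_eq mult.commute mult.left_commute)
    moreover have "a * (vi \<bullet> vi) / norm vi = a * norm vi"
      using nv by (simp add: power2_eq_square flip: power2_norm_eq_inner)
    ultimately have "(e \<bullet> v j - e \<bullet> vi) - a * (vi \<bullet> v j - vi \<bullet> vi) / norm vi \<ge> 0"
      using assms(3) assms(4) j by (simp add: right_diff_distrib diff_divide_distrib) (meson order_trans)
    then show "c j * ((e \<bullet> v j - e \<bullet> vi) - a * (vi \<bullet> v j - vi \<bullet> vi) / norm vi) \<ge> 0"
      using assms(4) j by simp
  qed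
  finally show ?thesis .
qed
theorem lemma2p2:
  fixes N :: nat and m :: "nat \<Rightarrow> real" and \<sigma> p \<kappa> :: real
    and \<phi> :: "real \<Rightarrow> real"
    and x v :: "nat \<Rightarrow> real \<Rightarrow> 'a::euclidean_space" and \<theta> :: "nat \<Rightarrow> real \<Rightarrow> real"
  assumes "N \<ge> 1"
    and "\<forall>i<N. m i > 0"
    and "\<sigma> > 0" and "p > 0" and "\<kappa> \<ge> 0"
    and "comm_kernel \<phi>"
    and "\<forall>i<N. \<theta> i 0 > 0"
    and "CSF_solution N m \<sigma> p \<kappa> \<phi> x v \<theta>"
    and "sectorial N v"
  shows "\<exists>c0>0. \<forall>t\<ge>0. Min ((\<lambda>i. norm (v i t)) ` {..<N}) \<ge> c0"
proof -
  from assms(9) obtain e :: 'a where e: "norm e = 1" "\<forall>i<N. e \<bullet> v i 0 > 0"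
    unfolding sectorial_def by blast
  have Nne: "{..<N} \<noteq> {}" using assms(1) by (simp add: lessThan_empty_iff)
  have cs: "\<And>y. e \<bullet> y \<le> norm y" using norm_cauchy_schwarz[of e] e(1) by simp
  define w0 where "w0 = Min ((\<lambda>i. e \<bullet> v i 0) ` {..<N})"
  define R0 where "R0 = Max ((\<lambda>i. norm (v i 0)) ` {..<N})"
  define th0 where "th0 = Min ((\<lambda>i. \<theta> i 0) ` {..<N})"
  have w0_le: "\<And>i. i<N \<Longrightarrow> w0 \<le> e \<bullet> v i 0" unfolding w0_def by (intro Min_le) auto
  have w0_pos: "w0 > 0" unfolding w0_def using Nne e(2) by (subst Min_gr_iff) auto
  have R0_ge: "\<And>i. i<N \<Longrightarrow> norm (v i 0) \<le> R0" unfolding R0_def by (intro Max_ge) auto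
  have R0_pos: "R0 > 0"
  proof -
    have "0 < e \<bullet> v 0 0" using e(2) assms(1) by auto
    also have "\<dots> \<le> norm (v 0 0)" by (rule cs)
    also have "\<dots> \<le> R0" using R0_ge assms(1) by auto
    finally show ?thesis .
  qed
  have th0_le: "\<And>i. i<N \<Longrightarrow> th0 \<le> \<theta> i 0" unfolding th0_def by (intro Min_le) auto
  have th0_pos: "th0 > 0" unfolding th0_def using Nne assms(7) by (subst Min_gr_iff) auto
  define a0 where "a0 = w0 / (2*R0)"
  have a0_pos: "a0 > 0" unfolding a0_def using w0_pos R0_pos by simp
  define X where "X = (th0/8) powr (1/p)"
  have X_pos: "X > 0" unfolding X_def using th0_pos by simp
  have Xp: "X powr p = th0/8" unfolding X_def using th0_pos assms(4) by (simp add: powr_powr)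
  define c where "c = min (w0/2) ((a0/2) * X)"
  have c_pos: "c > 0" unfolding c_def using w0_pos a0_pos X_pos by simp
  define al where "al = (\<lambda>t::real. a0 * (1 + exp (-t)) / 2)"
  have al_ge: "\<And>t. al t \<ge> a0/2" unfolding al_def using a0_pos
    by (simp add: field_simps)
  have al_pos: "\<And>t. al t > 0" using al_ge a0_pos by (metis half_gt_zero order_less_le_trans)
  have al0: "al 0 = a0" unfolding al_def by simp
  have al_der: "\<And>t. (al has_real_derivative -(a0 * exp (-t)) / 2) (at t within {0..})"
    unfolding al_def by (auto intro!: derivative_eq_intros)
  define A where "A = (\<lambda>i t. (\<Sum>j<N. (m j * \<phi> (norm (x i t - x j t))) *\<^sub>R (v j t - v i t)))"
  define s where "s = (\<lambda>i t. \<sigma> * (\<theta> i t - norm (v i t) powr p))"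
  have dv: "\<And>i t. i<N \<Longrightarrow> t\<ge>0 \<Longrightarrow> (v i has_vector_derivative (A i t + s i t *\<^sub>R v i t)) (at t within {0..})"
    using assms(8) unfolding CSF_solution_def A_def s_def by blast
  have dth: "\<And>i t. i<N \<Longrightarrow> t\<ge>0 \<Longrightarrow> (\<theta> i has_real_derivative
            (\<kappa> * (\<Sum>j<N. m j * \<phi> (norm (x i t - x j t)) * (\<theta> j t - \<theta> i t)))) (at t within {0..})"
    using assms(8) unfolding CSF_solution_def by blast
  have phipos: "\<And>y. y \<ge> 0 \<Longrightarrow> \<phi> y > 0" using assms(6) unfolding comm_kernel_def by blast
  have coef: "\<And>i j t. j<N \<Longrightarrow> m j * \<phi> (norm (x i t - x j t)) \<ge> 0"
    using assms(2) phipos by (simp add: less_imp_le)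
  have cv: "\<And>i. i<N \<Longrightarrow> continuous_on {0..} (v i)"
    using dv by (auto simp: continuous_on_eq_continuous_within intro: has_vector_derivative_continuous)
  have cth: "\<And>i. i<N \<Longrightarrow> continuous_on {0..} (\<theta> i)"
    using dth by (auto simp: continuous_on_eq_continuous_within intro: DERIV_continuous)
  define I where "I = {0,1,2::nat} \<times> {..<N}"
  define F where "F = (\<lambda>(k::nat,i::nat). \<lambda>t::real. if k = 0 then e \<bullet> v i t - c
      else if k = 1 then e \<bullet> v i t - al t * norm (v i t)
      else \<theta> i t - th0/4 * (1 + exp (-t)))"
  have F0: "F (0,i) = (\<lambda>t. e \<bullet> v i t - c)" for i by (simp add: F_def)
  have F1: "F (1,i) = (\<lambda>t. e \<bullet> v i t - al t * norm (v i t))" for i by (simp add: F_def)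
  have F1s: "F (Suc 0,i) = (\<lambda>t. e \<bullet> v i t - al t * norm (v i t))" for i by (simp add: F_def)
  have F2: "F (2,i) = (\<lambda>t. \<theta> i t - th0/4 * (1 + exp (-t)))" for i by (simp add: F_def)
  have Icases: "\<And>q. q \<in> I \<Longrightarrow> \<exists>i<N. q = (0,i) \<or> q = (1,i) \<or> q = (2,i)"
    unfolding I_def by auto
  have main: "\<forall>t\<ge>0. \<forall>q\<in>I. F q t > 0"
  proof (rule barrier)
    show "finite I" unfolding I_def by simp
  next
    fix q assume "q \<in> I"
    then obtain i where i: "i<N" "q = (0,i) \<or> q = (1,i) \<or> q = (2,i)" using Icases by blast
    have cal: "continuous_on {0..} al" unfolding al_def by (intro continuous_intros) auto
    have c0: "continuous_on {0..} (F (0,i))" unfolding F0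
      using cv[OF i(1)] by (intro continuous_intros)
    have c1: "continuous_on {0..} (F (1,i))" unfolding F1
      using cv[OF i(1)] cal by (intro continuous_intros)
    have c2: "continuous_on {0..} (F (2,i))" unfolding F2
      using cth[OF i(1)] by (intro continuous_intros)
    show "continuous_on {0..} (F q)"
      using i c0 c1 c2 by auto
  next
    fix q assume "q \<in> I"
    then obtain i where i: "i<N" "q = (0,i) \<or> q = (1,i) \<or> q = (2,i)" using Icases by blast
    have "c \<le> w0/2" unfolding c_def by simp
    then have g0: "e \<bullet> v i 0 - c > 0" using w0_le[OF i(1)] w0_pos by linarith
    have "a0 * norm (v i 0) \<le> a0 * R0" using R0_ge[OF i(1)] a0_pos by simp
    also have "\<dots> = w0/2" unfolding a0_def using R0_pos by simp
    finally have g1: "e \<bullet> v i 0 - al 0 * norm (v i 0) > 0"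
      using al0 w0_le[OF i(1)] w0_pos by simp
    have g2: "\<theta> i 0 - th0/4 * (1 + exp (-0)) > 0" using th0_le[OF i(1)] th0_pos by simp
    show "F q 0 > 0" using i g0 g1 g2 by (auto simp: F0 F1 F1s F2)
  next
    fix t q assume tpos: "t > 0" and "q \<in> I" and allnn: "\<forall>j\<in>I. F j t \<ge> 0" and Fz: "F q t = 0"
    then obtain i where i: "i<N" "q = (0,i) \<or> q = (1,i) \<or> q = (2,i)" using Icases by blast
    have H0: "\<And>j. j<N \<Longrightarrow> e \<bullet> v j t \<ge> c"
      using allnn unfolding I_def by (force simp: F0)
    have H1: "\<And>j. j<N \<Longrightarrow> e \<bullet> v j t \<ge> al t * norm (v j t)"
      using allnn unfolding I_def by (force simp: F1 F1s)
    have H2: "\<And>j. j<N \<Longrightarrow> \<theta> j t \<ge> th0/4 * (1 + exp (-t))"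
      using allnn unfolding I_def by (force simp: F2)
    have t0: "t \<ge> 0" using tpos by simp
    have vnz: "v i t \<noteq> 0" using H0[OF i(1)] c_pos by auto
    from i(2) show "\<exists>D>0. (F q has_real_derivative D) (at t within {0..})"
    proof (elim disjE)
      assume q: "q = (0,i)"
      then have wi: "e \<bullet> v i t = c" using Fz by (simp add: F0)
      have der: "(F q has_real_derivative (e \<bullet> (A i t + s i t *\<^sub>R v i t) - 0)) (at t within {0..})"
        unfolding q F0 by (intro DERIV_diff vd_inner dv[OF i(1) t0] DERIV_const)
      have eA: "e \<bullet> A i t \<ge> 0" unfolding A_def
        using H0 wi coef by (intro k0_ineq) auto
      have "a0/2 * norm (v i t) \<le> al t * norm (v i t)" using al_ge[of t] by (intro mult_right_mono) auto
      also have "\<dots> \<le> c" using H1[OF i(1)] wi by simp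
      also have "\<dots> \<le> a0/2 * X" unfolding c_def by simp
      finally have "norm (v i t) \<le> X" using a0_pos by simp
      then have "norm (v i t) powr p \<le> X powr p" using assms(4) by (intro powr_mono2) auto
      then have np: "norm (v i t) powr p \<le> th0/8" using Xp by simp
      have "th0/4 < th0/4 * (1 + exp (-t))" using th0_pos by simp
      with H2[OF i(1)] np have "\<theta> i t - norm (v i t) powr p > 0" using th0_pos by linarith
      then have spos: "s i t > 0" unfolding s_def using assms(3) by simp
      have "e \<bullet> (A i t + s i t *\<^sub>R v i t) - 0 = e \<bullet> A i t + s i t * c"
        using wi by (simp add: inner_add_right)
      also have "\<dots> > 0" using eA spos c_pos by (simp add: add_nonneg_pos)
      finally show ?thesis using der by blast
    next
      assume q: "q = (1,i)"
      then have wi: "e \<bullet> v i t = al t * norm (v i t)" using Fz by (simp add: F1s)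
      define V where "V = A i t + s i t *\<^sub>R v i t"
      have der: "(F q has_real_derivative (e \<bullet> V - (-(a0 * exp (-t)) / 2 * norm (v i t)
                   + (v i t \<bullet> V / norm (v i t)) * al t))) (at t within {0..})"
        unfolding q F1 V_def by (intro DERIV_diff vd_inner dv[OF i(1) t0] DERIV_mult al_der vd_norm vnz)
      have k1: "e \<bullet> A i t - al t * (v i t \<bullet> A i t) / norm (v i t) \<ge> 0"
        unfolding A_def using vnz al_pos[of t] wi H1 coef
        by (intro k1_ineq) (auto simp: less_imp_le)
      have nv: "norm (v i t) > 0" using vnz by simp
      have vv: "v i t \<bullet> v i t = norm (v i t) * norm (v i t)"
        by (simp add: power2_eq_square flip: power2_norm_eq_inner)
      have "e \<bullet> V - (-(a0 * exp (-t)) / 2 * norm (v i t) + (v i t \<bullet> V / norm (v i t)) * al t)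
          = (e \<bullet> A i t - al t * (v i t \<bullet> A i t) / norm (v i t))
            + s i t * (e \<bullet> v i t - al t * norm (v i t)) + a0 * exp (-t) / 2 * norm (v i t)"
        unfolding V_def using nv vv by (simp add: inner_add_right field_simps)
      also have "\<dots> > 0"
      proof -
        have "a0 * exp (-t) / 2 * norm (v i t) > 0" using a0_pos nv by simp
        then show ?thesis using k1 wi by simp
      qed
      finally show ?thesis using der by blast
    next
      assume q: "q = (2,i)"
      then have ti: "\<theta> i t = th0/4 * (1 + exp (-t))" using Fz by (simp add: F2)
      have der: "(F q has_real_derivative
          (\<kappa> * (\<Sum>j<N. m j * \<phi> (norm (x i t - x j t)) * (\<theta> j t - \<theta> i t))
            - th0/4 * (0 + - exp (-t)))) (at t within {0..})"
        unfolding q F2 by (intro DERIV_diff dth[OF i(1) t0] derivative_eq_intros) auto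
      have "(\<Sum>j<N. m j * \<phi> (norm (x i t - x j t)) * (\<theta> j t - \<theta> i t)) \<ge> 0"
      proof (intro sum_nonneg)
        fix j assume "j \<in> {..<N}"
        then have j: "j < N" by simp
        have "\<theta> j t - \<theta> i t \<ge> 0" using H2[OF j] ti by simp
        then show "m j * \<phi> (norm (x i t - x j t)) * (\<theta> j t - \<theta> i t) \<ge> 0"
          using coef[OF j] by simp
      qed
      then have "\<kappa> * (\<Sum>j<N. m j * \<phi> (norm (x i t - x j t)) * (\<theta> j t - \<theta> i t)) \<ge> 0"
        using assms(5) by simp
      moreover have "th0/4 * exp (-t) > 0" using th0_pos by simp
      ultimately show ?thesis using der by (intro exI[of _ "_ - th0/4 * (0 + - exp (-t))"]) auto
    qed
  qed
  show ?thesis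
  proof (intro exI[of _ c] conjI allI impI)
    show "c > 0" by (rule c_pos)
    fix t :: real assume t: "t \<ge> 0"
    show "Min ((\<lambda>i. norm (v i t)) ` {..<N}) \<ge> c"
    proof (rule Min.boundedI)
      show "finite ((\<lambda>i. norm (v i t)) ` {..<N})" by simp
      show "(\<lambda>i. norm (v i t)) ` {..<N} \<noteq> {}" using Nne by simp
      fix a assume "a \<in> (\<lambda>i. norm (v i t)) ` {..<N}"
      then obtain i where i: "i<N" "a = norm (v i t)" by auto
      have "(0,i) \<in> I" using i unfolding I_def by simp
      then have "e \<bullet> v i t - c > 0" using main t by (force simp: F0)
      then show "c \<le> a" using cs[of "v i t"] i by simp
    qed
  qed
qed

end
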